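(* Let $N>2$ be an odd positive integer with smallest prime factor $p$, and let $K\ge N$ be an integer. Let $a_2,a_1\in\mathbb{Z}_N$ with $\gcd(a_2,N)=1$, and let $f:\mathbb{Z}_N\to\mathbb{Z}_K$ be defined by $f(x)=\phi(a_2x^2+a_1x)$, where $\phi:\mathbb{Z}_N\to\mathbb{Z}_K$ sends the class of $y\in\{0,\dots,N-1\}$ to the class of $y$ modulo $K$. For $0\le k<N$ let $\mathbf{a}_k=(a_k(0),\dots,a_k(K-1))$ with $a_k(t)=\omega_K^{tf(k)}$. Let $\mathbf{h}_0,\dots,\mathbf{h}_{N-1}$ be unimodular complex sequences of length $N$ such that for all $0\le i\ne j<N$ and all $0\le v<N$, $$\Big|\sum_{n=0}^{N-1}h_i(n)h_j^*(n)\Big|\le 1,\qquad \Big|\sum_{n=0}^{N-1}h_i(n)h_j^*(n)\omega_N^{nv}\Big|<N.$$ For $0\le i<N$ define $\mathbf{s}_i$ of length $NK$ by $s_i(tN+k)=h_i(k)a_k(t)$ ($0\le t<K$, $0\le k<N$) and let $\mathcal{S}=\{\mathbf{s}_0,\dots,\mathbf{s}_{N-1}\}$. Then $\mathcal{S}$ is an aperiodic $(N,NK,\Pi,K+p-1)$-LAZ sequence set, where (1) $\Pi=(-p,p)\times(-N,N)$ if $K=N$; (2) $\Pi=(-p,p)\times(-K+N-1,K-N+1)$ if $N<K<2N-1$; (3) $\Pi=(-p,p)\times(-K,K)$ if $K\ge 2N-1$.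
   Context: $\omega_L=e^{2\pi\sqrt{-1}/L}$, $z^*$ is complex conjugation, unimodular means all entries have modulus 1. For sequences $\mathbf{a},\mathbf{b}$ of length $L$, the aperiodic cross-ambiguity function is $\hat{AF}_{\mathbf{a},\mathbf{b}}(\tau,v)=\sum_{t=0}^{L-1-\tau}a(t)b^*(t+\tau)\omega_L^{vt}$ for $0\le\tau\le L-1$, $\hat{AF}_{\mathbf{a},\mathbf{b}}(\tau,v)=\sum_{t=-\tau}^{L-1}a(t)b^*(t+\tau)\omega_L^{vt}$ for $-L<\tau<0$, and $0$ for $|\tau|\ge L$; $\hat{AF}_{\mathbf{a}}=\hat{AF}_{\mathbf{a},\mathbf{a}}$. A set of $M$ sequences of length $L$ is an $(M,L,\Pi,\hat\theta)$-LAZ aperiodic sequence set if $|\hat{AF}_{\mathbf{a}}(\tau,v)|\le\hat\theta$ for all sequences $\mathbf{a}$ in the set and all integer $(0,0)\ne(\tau,v)\in\Pi$, and $|\hat{AF}_{\mathbf{a},\mathbf{b}}(\tau,v)|\le\hat\theta$ for all distinct $\mathbf{a},\mathbf{b}$ in the set and all integer $(\tau,v)\in\Pi$. *)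

theory Defs
  imports Complex_Main "HOL-Computational_Algebra.Primes"
begin

definition omega_pow :: "nat \<Rightarrow> int \<Rightarrow> complex" where
  "omega_pow L m = cis (2 * pi * real_of_int m / real L)"

text \<open>Aperiodic cross-ambiguity function of sequences a, b of length L
  (only the entries with index < L matter).\<close>
definition aperiodic_AF :: "(nat \<Rightarrow> complex) \<Rightarrow> (nat \<Rightarrow> complex) \<Rightarrow> nat \<Rightarrow> int \<Rightarrow> int \<Rightarrow> complex" where
  "aperiodic_AF a b L \<tau> v =
     (if 0 \<le> \<tau> \<and> \<tau> \<le> int L - 1 then
        (\<Sum>t\<in>{0..int L - 1 - \<tau>}. a (nat t) * cnj (b (nat (t + \<tau>))) * omega_pow L (v * t))
      else if - int L < \<tau> \<and> \<tau> < 0 then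
        (\<Sum>t\<in>{-\<tau>..int L - 1}. a (nat t) * cnj (b (nat (t + \<tau>))) * omega_pow L (v * t))
      else 0)"

definition is_LAZ_aperiodic :: "nat \<Rightarrow> nat \<Rightarrow> (int \<times> int) set \<Rightarrow> real \<Rightarrow> (nat \<Rightarrow> nat \<Rightarrow> complex) \<Rightarrow> bool" where
  "is_LAZ_aperiodic M L Pi \<theta> s \<longleftrightarrow>
     (\<forall>i<M. \<forall>\<tau> v. (\<tau>, v) \<in> Pi \<and> (\<tau>, v) \<noteq> (0, 0) \<longrightarrow> cmod (aperiodic_AF (s i) (s i) L \<tau> v) \<le> \<theta>) \<and>
     (\<forall>i<M. \<forall>j<M. i \<noteq> j \<longrightarrow> (\<forall>\<tau> v. (\<tau>, v) \<in> Pi \<longrightarrow> cmod (aperiodic_AF (s i) (s j) L \<tau> v) \<le> \<theta>))"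

end

theory Submission
  imports Defs
begin

lemma om_add: "omega_pow L (a + b) = omega_pow L a * omega_pow L b"
  by (simp add: omega_pow_def cis_mult add_divide_distrib distrib_left)

lemma om_cnj: "cnj (omega_pow L m) = omega_pow L (- m)"
  by (simp add: omega_pow_def cis_cnj)

lemma om_norm[simp]: "cmod (omega_pow L m) = 1"
  by (simp add: omega_pow_def)

lemma om_pow: "omega_pow L (int t * e) = (omega_pow L e) ^ t"
  by (simp add: omega_pow_def DeMoivre algebra_simps)

lemma om_scale: "N > 0 \<Longrightarrow> omega_pow (N * K) (x * int N) = omega_pow K x"
  by (simp add: omega_pow_def field_simps)

lemma om_zero[simp]: "omega_pow L 0 = 1"
  by (simp add: omega_pow_def)

lemma om_one: assumes "K > 0" "omega_pow K e = 1" shows "int K dvd e"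
proof -
  have "cos (2 * pi * real_of_int e / real K) = 1"
    using assms(2) unfolding omega_pow_def by (metis cis.sel(1) one_complex.sel(1))
  then obtain n where n: "2 * pi * real_of_int e / real K = real_of_int n * 2 * pi"
    using cos_one_2pi_int by blast
  then have "real_of_int e = real_of_int n * real K" using assms(1)
    by (simp add: field_simps)
  then have "e = n * int K" by (metis of_int_eq_iff of_int_mult of_int_of_nat_eq)
  then show ?thesis by simp
qed

lemma om_powK: "K > 0 \<Longrightarrow> (omega_pow K e) ^ K = 1"
proof -
  assume "K > 0"
  have "(omega_pow K e) ^ K = omega_pow K (int K * e)" by (simp add: om_pow)
  also have "\<dots> = cis (2 * pi * real_of_int e)" unfolding omega_pow_def
    by (rule arg_cong[where f=cis]) (use \<open>K>0\<close> in simp)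
  also have "\<dots> = 1"
    by (rule complex_eqI) (simp_all only: cis.sel cos_int_2pin sin_int_2pin, simp_all)
  finally show ?thesis .
qed

lemma geo_full: assumes "K > 0" "\<not> int K dvd e"
  shows "(\<Sum>t<K. (omega_pow K e) ^ t) = 0"
proof -
  have "omega_pow K e \<noteq> 1" using om_one assms by blast
  then show ?thesis using om_powK[OF assms(1)] by (simp add: sum_gp_strict)
qed

lemma geo_bound: "cmod (\<Sum>t<n. (omega_pow K e) ^ t) \<le> n"
proof -
  have "cmod (\<Sum>t<n. (omega_pow K e) ^ t) \<le> (\<Sum>t<n. cmod ((omega_pow K e) ^ t))"
    by (rule norm_sum)
  also have "\<dots> = n" by (simp add: norm_power)
  finally show ?thesis .
qed

lemma geo_m1: assumes "K > 0" "\<not> int K dvd e"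
  shows "cmod (\<Sum>t<K-1. (omega_pow K e) ^ t) = 1"
proof -
  have "K = Suc (K-1)" using assms by simp
  then have "(\<Sum>t<K. (omega_pow K e) ^ t) = (\<Sum>t<K-1. (omega_pow K e) ^ t) + (omega_pow K e)^(K-1)"
    by (metis sum.lessThan_Suc)
  then have "(\<Sum>t<K-1. (omega_pow K e) ^ t) = - ((omega_pow K e)^(K-1))"
    using geo_full[OF assms] by (simp add: eq_neg_iff_add_eq_0)
  then show ?thesis by (simp add: norm_power)
qed

lemma sum_int_nat: "(\<Sum>t\<in>{0..int n - 1}. F t) = (\<Sum>m<n. F (int m))"
  by (rule sum.reindex_bij_witness[of _ int nat]) auto

lemma sum_blocks: "(\<Sum>m<K*(N::nat). F m) = (\<Sum>t<K. \<Sum>k<N. F (t*N+k))"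
proof (induction K)
  case 0 then show ?case by simp
next
  case (Suc K)
  have "(\<Sum>m<Suc K*N. F m) = (\<Sum>m<K*N. F m) + (\<Sum>m\<in>{K*N..<K*N+N}. F m)"
    by (simp add: add.commute sum.atLeastLessThan_concat[symmetric] lessThan_atLeast0
        flip: sum.atLeastLessThan_concat)
  also have "(\<Sum>m\<in>{K*N..<K*N+N}. F m) = (\<Sum>k<N. F (K*N+k))"
    by (rule sum.reindex_bij_witness[of _ "\<lambda>k. K*N+k" "\<lambda>m. m - K*N"]) auto
  finally show ?case using Suc by simp
qed

lemma AF_neg: assumes "0 < \<sigma>" "\<sigma> < L"
  shows "aperiodic_AF a b L (- int \<sigma>) v = omega_pow L (v * int \<sigma>) * cnj (aperiodic_AF b a L (int \<sigma>) (- v))"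
proof -
  have l: "aperiodic_AF a b L (- int \<sigma>) v = (\<Sum>t\<in>{int \<sigma>..int L - 1}. a (nat t) * cnj (b (nat (t - int \<sigma>))) * omega_pow L (v * t))"
    using assms unfolding aperiodic_AF_def by simp
  have r: "aperiodic_AF b a L (int \<sigma>) (- v) = (\<Sum>u\<in>{0..int L - 1 - int \<sigma>}. b (nat u) * cnj (a (nat (u + int \<sigma>))) * omega_pow L (- v * u))"
    using assms unfolding aperiodic_AF_def by simp
  have "omega_pow L (v * int \<sigma>) * cnj (aperiodic_AF b a L (int \<sigma>) (- v))
     = (\<Sum>u\<in>{0..int L - 1 - int \<sigma>}. omega_pow L (v * int \<sigma>) * (cnj (b (nat u)) * a (nat (u + int \<sigma>)) * omega_pow L (v * u)))"
    unfolding r cnj_sum sum_distrib_left by (simp add: om_cnj)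
  also have "\<dots> = (\<Sum>t\<in>{int \<sigma>..int L - 1}. a (nat t) * cnj (b (nat (t - int \<sigma>))) * omega_pow L (v * t))"
    apply (rule sum.reindex_bij_witness[of _ "\<lambda>t. t - int \<sigma>" "\<lambda>u. u + int \<sigma>"])
    apply (auto simp: distrib_left om_add mult_ac)
    done
  finally show ?thesis using l by simp
qed


lemma om_comb1: fixes a b v :: int and t k :: nat assumes "N > 0"
  shows "omega_pow K (int t * a) * cnj (omega_pow K (int t * b)) * omega_pow (N * K) (v * int (t * N + k))
       = omega_pow (N * K) (v * int k) * (omega_pow K (a - b + v)) ^ t"
proof -
  have "v * int (t * N + k) = (int t * v) * int N + v * int k" by (simp add: algebra_simps)
  then have 1: "omega_pow (N * K) (v * int (t * N + k)) = omega_pow K (int t * v) * omega_pow (N * K) (v * int k)"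
    using assms by (simp add: om_add om_scale)
  have e: "int t * (a - b + v) = int t * a + - (int t * b) + int t * v" by (simp add: algebra_simps)
  have 2: "(omega_pow K (a - b + v)) ^ t = omega_pow K (int t * a) * omega_pow K (- (int t * b)) * omega_pow K (int t * v)"
    unfolding om_pow[symmetric] e by (simp only: om_add)
  show ?thesis unfolding 1 2 by (simp add: om_cnj mult_ac)
qed

lemma om_comb2: fixes a b v :: int and t k :: nat assumes "N > 0"
  shows "omega_pow K (int t * a) * cnj (omega_pow K (int (t + 1) * b)) * omega_pow (N * K) (v * int (t * N + k))
       = omega_pow K (- b) * omega_pow (N * K) (v * int k) * (omega_pow K (a - b + v)) ^ t"
proof -
  have "int (t + 1) * b = int t * b + b" by (simp add: algebra_simps)
  then have "cnj (omega_pow K (int (t + 1) * b)) = cnj (omega_pow K (int t * b)) * omega_pow K (- b)"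
    by (simp add: om_add om_cnj)
  then show ?thesis using om_comb1[OF assms, where t=t and a=a and b=b and v=v and k=k and K=K] by (simp add: mult_ac)
qed

lemma dvd_small: "int K dvd x \<Longrightarrow> \<bar>x\<bar> < int K \<Longrightarrow> x = 0"
proof (rule ccontr)
  assume "int K dvd x" "\<bar>x\<bar> < int K" "x \<noteq> 0"
  then have "\<bar>int K\<bar> \<le> \<bar>x\<bar>" using dvd_imp_le_int by blast
  then show False using \<open>\<bar>x\<bar> < int K\<close> by simp
qed

locale lz =
  fixes N K p :: nat and a2 a1 :: int
    and h :: "nat \<Rightarrow> nat \<Rightarrow> complex" and s :: "nat \<Rightarrow> nat \<Rightarrow> complex"
    and f :: "nat \<Rightarrow> int"
  assumes N_odd: "odd N" and N_gt: "N > 2"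
    and p_prime: "prime p" and p_dvd: "p dvd N"
    and p_min: "\<forall>q. prime q \<and> q dvd N \<longrightarrow> p \<le> q"
    and K_ge: "K \<ge> N"
    and a2_cop: "coprime a2 (int N)"
    and f_def: "\<forall>x. f x = ((a2 * (int x)^2 + a1 * int x) mod int N) mod int K"
    and h_unimod: "\<forall>i<N. \<forall>n<N. cmod (h i n) = 1"
    and s_def: "\<forall>i<N. \<forall>t<K. \<forall>k<N.
                   s i (t * N + k) = h i k * omega_pow K (int t * f k)"
begin

lemma f_eq: "f x = (a2 * (int x)^2 + a1 * int x) mod int N"
proof -
  have "0 \<le> (a2 * (int x)^2 + a1 * int x) mod int N" "(a2 * (int x)^2 + a1 * int x) mod int N < int K"
  proof -
    show "0 \<le> (a2 * (int x)^2 + a1 * int x) mod int N" using N_gt by simp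
    have "(a2 * (int x)^2 + a1 * int x) mod int N < int N" using N_gt by simp
    then show "(a2 * (int x)^2 + a1 * int x) mod int N < int K" using K_ge by linarith
  qed
  then have "(a2 * (int x)^2 + a1 * int x) mod int N mod int K = (a2 * (int x)^2 + a1 * int x) mod int N"
    by (rule mod_pos_pos_trivial)
  then show ?thesis using f_def by metis
qed

lemma f_range: "0 \<le> f x" "f x < int N"
  using N_gt by (auto simp: f_eq)

lemma f_mod: "f (x mod N) = f x"
proof -
  define q where "q = int x div int N"
  define r where "r = int x mod int N"
  have x: "int x = r + q * int N" unfolding q_def r_def by simp
  have "a2 * (int x)^2 + a1 * int x - (a2 * r^2 + a1 * r) = int N * (a2 * (2 * r * q + q * q * int N) + a1 * q)"
    unfolding x by (simp add: algebra_simps power2_eq_square)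
  then have "(a2 * r^2 + a1 * r) mod int N = (a2 * (int x)^2 + a1 * int x) mod int N"
    by (metis dvd_triv_left mod_eq_dvd_iff)
  then show ?thesis unfolding f_eq r_def by (simp add: zmod_int)
qed

definition d :: "nat \<Rightarrow> nat \<Rightarrow> int" where
  "d \<tau> k = f k - f ((k + \<tau>) mod N)"

lemma d_cong: "int N dvd (d \<tau> k + 2 * a2 * int \<tau> * int k + a2 * (int \<tau>)^2 + a1 * int \<tau>)"
proof -
  define X where "X = a2 * (int k)^2 + a1 * int k"
  define Y where "Y = a2 * (int (k+\<tau>))^2 + a1 * int (k+\<tau>)"
  have fx: "f k = X - X div int N * int N" unfolding f_eq X_def by (simp add: minus_div_mult_eq_mod)
  have fy: "f ((k + \<tau>) mod N) = Y - Y div int N * int N" unfolding f_mod unfolding f_eq Y_def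
    by (simp add: minus_div_mult_eq_mod)
  have "d \<tau> k + 2 * a2 * int \<tau> * int k + a2 * (int \<tau>)^2 + a1 * int \<tau> = int N * (Y div int N - X div int N)"
    unfolding d_def fx fy X_def Y_def by (simp add: algebra_simps power2_eq_square)
  then show ?thesis by simp
qed

lemma d_range: "\<bar>d \<tau> k\<bar> < int N"
  unfolding d_def using f_range[of k] f_range[of "(k + \<tau>) mod N"] by linarith

lemma tau_cop: assumes "0 < \<tau>" "\<tau> < p" shows "coprime (int \<tau>) (int N)"
proof (rule ccontr)
  assume "\<not> coprime (int \<tau>) (int N)"
  then have "gcd \<tau> N \<noteq> 1" by (simp add: coprime_int_iff coprime_iff_gcd_eq_1)
  then obtain q where q: "prime q" "q dvd gcd \<tau> N" using prime_factor_nat by blast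
  then have "q dvd \<tau>" "q dvd N" by auto
  then have "p \<le> q" "q \<le> \<tau>" using p_min q assms(1) by (auto intro: dvd_imp_le)
  then show False using assms by simp
qed

definition vcond :: "int \<Rightarrow> bool" where
  "vcond v \<longleftrightarrow> (K = N \<and> \<bar>v\<bar> < int N) \<or> (N < K \<and> K < 2 * N - 1 \<and> \<bar>v\<bar> \<le> int K - int N)
      \<or> (2 * N - 1 \<le> K \<and> \<bar>v\<bar> < int K)"

lemma vcond_lt: "vcond v \<Longrightarrow> \<bar>v\<bar> < int K"
  unfolding vcond_def using N_gt by auto

lemma vcond_neg: "vcond v \<Longrightarrow> vcond (- v)"
  unfolding vcond_def by auto

lemma dd_cong: assumes "vcond v" "int K dvd (x + v)" "int K dvd (y + v)" "\<bar>x\<bar> < int N" "\<bar>y\<bar> < int N"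
  shows "int N dvd (x - y)"
proof -
  consider "K = N" | "N < K \<and> K < 2 * N - 1 \<and> \<bar>v\<bar> \<le> int K - int N" | "2 * N - 1 \<le> K"
    using assms(1) unfolding vcond_def by auto
  then show ?thesis
  proof cases
    case 1
    then have "int N dvd ((x + v) - (y + v))" using assms by (metis dvd_diff)
    then show ?thesis by simp
  next
    case 2
    have "\<bar>x + v\<bar> < int K" "\<bar>y + v\<bar> < int K" using 2 assms(4,5) by linarith+
    then have "x + v = 0" "y + v = 0" using assms(2,3) dvd_small by blast+
    then have "x - y = 0" by linarith
    then show ?thesis by simp
  next
    case 3
    have "int K dvd ((x + v) - (y + v))" using assms by (metis dvd_diff)
    then have "int K dvd (x - y)" by simp
    moreover have "\<bar>x - y\<bar> < int K" using 3 assms(4,5) N_gt by linarith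
    ultimately have "x - y = 0" by (rule dvd_small)
    then show ?thesis by simp
  qed
qed

definition P :: "nat \<Rightarrow> int \<Rightarrow> nat \<Rightarrow> bool" where
  "P \<tau> v k \<longleftrightarrow> int K dvd (d \<tau> k + v)"

lemma uniq: assumes "0 < \<tau>" "\<tau> < p" "vcond v" "k1 < N" "k2 < N" "P \<tau> v k1" "P \<tau> v k2"
  shows "k1 = k2"
proof -
  have "int N dvd (d \<tau> k1 - d \<tau> k2)"
    using dd_cong[OF assms(3)] assms(6,7) d_range unfolding P_def by blast
  moreover have "int N dvd ((d \<tau> k1 + 2 * a2 * int \<tau> * int k1 + a2 * (int \<tau>)^2 + a1 * int \<tau>)
     - (d \<tau> k2 + 2 * a2 * int \<tau> * int k2 + a2 * (int \<tau>)^2 + a1 * int \<tau>))"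
    using d_cong by (metis dvd_diff)
  ultimately have "int N dvd ((d \<tau> k1 + 2 * a2 * int \<tau> * int k1 + a2 * (int \<tau>)^2 + a1 * int \<tau>)
     - (d \<tau> k2 + 2 * a2 * int \<tau> * int k2 + a2 * (int \<tau>)^2 + a1 * int \<tau>) - (d \<tau> k1 - d \<tau> k2))"
    by (metis dvd_diff)
  then have "int N dvd ((2 * a2 * int \<tau>) * (int k1 - int k2))" by (simp add: algebra_simps)
  moreover have "coprime (int N) (2 * a2 * int \<tau>)"
  proof -
    have "coprime (int N) 2" using N_odd by (simp add: coprime_commute)
    moreover have "coprime (int N) a2" using a2_cop by (simp add: coprime_commute)
    moreover have "coprime (int N) (int \<tau>)" using tau_cop[OF assms(1,2)] by (simp add: coprime_commute)
    ultimately show ?thesis by simp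
  qed
  ultimately have "int N dvd (int k1 - int k2)" by (simp add: coprime_dvd_mult_right_iff)
  moreover have "\<bar>int k1 - int k2\<bar> < int N" using assms(4,5) by linarith
  ultimately have "int k1 - int k2 = 0" by (rule dvd_small)
  then show ?thesis by simp
qed

end

context lz begin

lemma N_pos: "N > 0" and K_pos: "K > 0" using N_gt K_ge by auto

definition G :: "nat \<Rightarrow> nat \<Rightarrow> nat \<Rightarrow> int \<Rightarrow> nat \<Rightarrow> complex" where
  "G i j \<tau> v m = s i m * cnj (s j (m + \<tau>)) * omega_pow (N * K) (v * int m)"

definition C :: "nat \<Rightarrow> nat \<Rightarrow> nat \<Rightarrow> int \<Rightarrow> nat \<Rightarrow> complex" where
  "C i j \<tau> v k = (\<Sum>t<K. if t * N + k < N * K - \<tau> then G i j \<tau> v (t * N + k) else 0)"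

lemma AF_pos: assumes "\<tau> < N"
  shows "aperiodic_AF (s i) (s j) (N * K) (int \<tau>) v = (\<Sum>k<N. C i j \<tau> v k)"
proof -
  have NK: "N \<le> N * K" using K_pos by simp
  have e0: "int (N * K - \<tau>) = int (N * K) - int \<tau>" using assms NK by (intro of_nat_diff) linarith
  have e1: "int (N * K) - 1 - int \<tau> = int (N * K - \<tau>) - 1" using e0 by linarith
  have "aperiodic_AF (s i) (s j) (N * K) (int \<tau>) v
      = (\<Sum>t\<in>{0..int (N * K - \<tau>) - 1}. s i (nat t) * cnj (s j (nat (t + int \<tau>))) * omega_pow (N * K) (v * t))"
    unfolding aperiodic_AF_def e1[symmetric] using assms NK by simp
  also have "\<dots> = (\<Sum>m<N * K - \<tau>. G i j \<tau> v m)"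
    unfolding sum_int_nat G_def by (simp add: nat_add_distrib)
  also have "\<dots> = (\<Sum>m\<in>{x \<in> {..<K * N}. x < N * K - \<tau>}. G i j \<tau> v m)"
    by (rule sum.cong) (auto simp: mult.commute)
  also have "\<dots> = (\<Sum>m<K * N. if m < N * K - \<tau> then G i j \<tau> v m else 0)"
    by (rule sum.inter_filter) simp
  also have "\<dots> = (\<Sum>t<K. \<Sum>k<N. if t * N + k < N * K - \<tau> then G i j \<tau> v (t * N + k) else 0)"
    by (rule sum_blocks)
  also have "\<dots> = (\<Sum>k<N. C i j \<tau> v k)"
    unfolding C_def by (rule sum.swap)
  finally show ?thesis .
qed

lemma C_nowrap: assumes "i < N" "j < N" "k < N" "k + \<tau> < N"
  shows "C i j \<tau> v k = h i k * cnj (h j (k + \<tau>)) * omega_pow (N * K) (v * int k)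
          * (\<Sum>t<K. (omega_pow K (f k - f (k + \<tau>) + v)) ^ t)"
  unfolding C_def sum_distrib_left
proof (rule sum.cong)
  fix t assume "t \<in> {..<K}"
  then have t: "t < K" by simp
  have "Suc t * N \<le> K * N" using t by (intro mult_le_mono1) simp
  then have c: "t * N + k < N * K - \<tau>" using assms(4) by (simp add: algebra_simps)
  have si: "s i (t * N + k) = h i k * omega_pow K (int t * f k)" using s_def assms t by blast
  have sj: "s j (t * N + k + \<tau>) = h j (k + \<tau>) * omega_pow K (int t * f (k + \<tau>))"
    using s_def assms t by (metis add.assoc)
  show "(if t * N + k < N * K - \<tau> then G i j \<tau> v (t * N + k) else 0) =
        h i k * cnj (h j (k + \<tau>)) * omega_pow (N * K) (v * int k) * omega_pow K (f k - f (k + \<tau>) + v) ^ t"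
    using c om_comb1[OF N_pos, where t=t and a="f k" and b="f (k + \<tau>)" and v=v and k=k and K=K]
    unfolding G_def si sj by (simp add: mult_ac)
qed simp


lemma C_wrap: assumes "i < N" "j < N" "k < N" "N \<le> k + \<tau>" "\<tau> < N"
  shows "C i j \<tau> v k = h i k * cnj (h j (k + \<tau> - N)) * omega_pow K (- f (k + \<tau> - N)) * omega_pow (N * K) (v * int k)
          * (\<Sum>t<K - 1. (omega_pow K (f k - f (k + \<tau> - N) + v)) ^ t)"
proof -
  define X where "X t = h i k * cnj (h j (k + \<tau> - N)) * omega_pow K (- f (k + \<tau> - N)) * omega_pow (N * K) (v * int k)
          * (omega_pow K (f k - f (k + \<tau> - N) + v)) ^ t" for t
  have K1: "K = Suc (K - 1)" using K_pos by simp
  have cond: "(t * N + k < N * K - \<tau>) \<longleftrightarrow> t < K - 1" if "t < K" for t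
  proof
    assume a: "t * N + k < N * K - \<tau>"
    show "t < K - 1"
    proof (rule ccontr)
      assume "\<not> t < K - 1"
      then have "t = K - 1" using that by simp
      then have "Suc t = K" using K1 by simp
      then have "t * N + N = K * N" by auto
      then show False using a assms(4) by (simp add: algebra_simps)
    qed
  next
    assume a: "t < K - 1"
    then have "Suc (Suc t) * N \<le> K * N" by (intro mult_le_mono1) simp
    then show "t * N + k < N * K - \<tau>" using assms(3,5) by (simp add: algebra_simps)
  qed
  have trm: "G i j \<tau> v (t * N + k) = X t" if "t < K - 1" for t
  proof -
    have si: "s i (t * N + k) = h i k * omega_pow K (int t * f k)" using s_def assms that by simp
    have e: "t * N + k + \<tau> = (t + 1) * N + (k + \<tau> - N)" using assms(4) by simp
    have l1: "t + 1 < K" "k + \<tau> - N < N" using that assms by auto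
    have sj0: "s j ((t + 1) * N + (k + \<tau> - N)) = h j (k + \<tau> - N) * omega_pow K (int (t + 1) * f (k + \<tau> - N))"
      using s_def assms(2) l1 by blast
    have sj: "s j (t * N + k + \<tau>) = h j (k + \<tau> - N) * omega_pow K (int (t + 1) * f (k + \<tau> - N))"
      using sj0 e by metis
    show ?thesis
      using om_comb2[OF N_pos, where t=t and a="f k" and b="f (k + \<tau> - N)" and v=v and k=k and K=K]
      unfolding G_def si sj X_def by (simp add: mult_ac)
  qed
  have "C i j \<tau> v k = (\<Sum>t<Suc (K - 1). if t < K - 1 then X t else 0)"
    unfolding C_def by (subst K1[symmetric], rule sum.cong) (auto simp: cond trm)
  also have "\<dots> = (\<Sum>t<K - 1. X t)" by (simp add: sum.lessThan_Suc)
  finally show ?thesis unfolding X_def sum_distrib_left by simp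
qed

end

context lz begin

lemma h_norm: "i < N \<Longrightarrow> n < N \<Longrightarrow> cmod (h i n) = 1"
  using h_unimod by blast

lemma C_bound: assumes "i < N" "j < N" "k < N" "\<tau> < N"
  shows "cmod (C i j \<tau> v k) \<le> (if P \<tau> v k then real K else 0) + (if N \<le> k + \<tau> then 1 else 0)"
proof (cases "k + \<tau> < N")
  case True
  have m: "(k + \<tau>) mod N = k + \<tau>" using True by simp
  have "cmod (C i j \<tau> v k) = cmod (\<Sum>t<K. (omega_pow K (f k - f (k + \<tau>) + v)) ^ t)"
    unfolding C_nowrap[OF assms(1-3) True] using assms True
    by (simp add: norm_mult h_norm)
  also have "\<dots> \<le> (if P \<tau> v k then real K else 0)"
  proof (cases "P \<tau> v k")
    case True then show ?thesis using geo_bound by simp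
  next
    case False
    then have "\<not> int K dvd (f k - f (k + \<tau>) + v)" unfolding P_def d_def m .
    then show ?thesis using geo_full[OF K_pos] False by simp
  qed
  finally show ?thesis using True by simp
next
  case False
  then have w: "N \<le> k + \<tau>" by simp
  have m: "(k + \<tau>) mod N = k + \<tau> - N" using w assms(3,4) by (simp add: mod_if)
  have "cmod (C i j \<tau> v k) = cmod (\<Sum>t<K - 1. (omega_pow K (f k - f (k + \<tau> - N) + v)) ^ t)"
    unfolding C_wrap[OF assms(1-3) w assms(4)] using assms w
    by (simp add: norm_mult h_norm)
  also have "\<dots> \<le> (if P \<tau> v k then real K else 0) + 1"
  proof (cases "P \<tau> v k")
    case True
    have "cmod (\<Sum>t<K - 1. (omega_pow K (f k - f (k + \<tau> - N) + v)) ^ t) \<le> real (K - 1)"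
      by (rule geo_bound)
    also have "\<dots> \<le> real K" by simp
    finally show ?thesis using True by simp
  next
    case False
    then have "\<not> int K dvd (f k - f (k + \<tau> - N) + v)" unfolding P_def d_def m .
    then show ?thesis using geo_m1[OF K_pos] False by simp
  qed
  finally show ?thesis using w by simp
qed

lemma count_wrap: assumes "\<tau> \<le> N"
  shows "(\<Sum>k<N. (if N \<le> k + \<tau> then 1 else 0 :: real)) = real \<tau>"
proof -
  have "(\<Sum>k<N. (if N \<le> k + \<tau> then 1 else 0 :: real)) = (\<Sum>k\<in>{x \<in> {..<N}. N \<le> x + \<tau>}. 1)"
    by (rule sum.inter_filter[symmetric]) simp
  also have "{x \<in> {..<N}. N \<le> x + \<tau>} = {N - \<tau>..<N}" using assms by auto
  finally show ?thesis using assms by simp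
qed

lemma count_P: assumes "0 < \<tau>" "\<tau> < p" "vcond v"
  shows "(\<Sum>k<N. (if P \<tau> v k then real K else 0)) \<le> real K"
proof (cases "\<exists>k0<N. P \<tau> v k0")
  case True
  then obtain k0 where k0: "k0 < N" "P \<tau> v k0" by blast
  have "(\<Sum>k<N. (if P \<tau> v k then real K else 0)) = (\<Sum>k<N. (if k = k0 then real K else 0))"
    by (rule sum.cong) (use uniq[OF assms] k0 in auto)
  also have "\<dots> = real K" using k0 by (simp add: sum.delta)
  finally show ?thesis by simp
next
  case False
  then have "(\<Sum>k<N. (if P \<tau> v k then real K else 0)) = 0" by (intro sum.neutral) auto
  then show ?thesis by simp
qed

lemma p_le_N: "p \<le> N" using p_dvd N_pos by (simp add: dvd_imp_le)

lemma main_pos: assumes "0 < \<tau>" "\<tau> < p" "vcond v" "i < N" "j < N"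
  shows "cmod (aperiodic_AF (s i) (s j) (N * K) (int \<tau>) v) \<le> real K + real p - 1"
proof -
  have tN: "\<tau> < N" using assms p_le_N by simp
  have "cmod (aperiodic_AF (s i) (s j) (N * K) (int \<tau>) v) \<le> (\<Sum>k<N. cmod (C i j \<tau> v k))"
    unfolding AF_pos[OF tN] by (rule norm_sum)
  also have "\<dots> \<le> (\<Sum>k<N. (if P \<tau> v k then real K else 0) + (if N \<le> k + \<tau> then 1 else 0))"
    by (rule sum_mono) (use C_bound assms tN in auto)
  also have "\<dots> = (\<Sum>k<N. (if P \<tau> v k then real K else 0)) + (\<Sum>k<N. (if N \<le> k + \<tau> then 1 else 0 :: real))"
    by (rule sum.distrib)
  also have "\<dots> \<le> real K + real \<tau>" using count_P[OF assms(1-3)] count_wrap[of \<tau>] tN by simp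
  also have "\<dots> \<le> real K + real p - 1" using assms(2) by simp
  finally show ?thesis .
qed

lemma main_zero: assumes "vcond v" "i < N" "j < N" "i = j \<longrightarrow> v \<noteq> 0"
    and h_corr: "\<forall>i<N. \<forall>j<N. i \<noteq> j \<longrightarrow> cmod (\<Sum>n<N. h i n * cnj (h j n)) \<le> 1"
  shows "cmod (aperiodic_AF (s i) (s j) (N * K) (int 0) v) \<le> real K + real p - 1"
proof -
  have p1: "1 \<le> p" using p_prime prime_ge_1_nat by blast
  have C0: "C i j 0 v k = h i k * cnj (h j k) * omega_pow (N * K) (v * int k) * (\<Sum>t<K. (omega_pow K v) ^ t)"
    if "k < N" for k
    using C_nowrap[OF assms(2,3) that, of 0 v] that by simp
  show ?thesis
  proof (cases "v = 0")
    case False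
    have "\<not> int K dvd v" using dvd_small vcond_lt[OF assms(1)] False by blast
    then have "C i j 0 v k = 0" if "k < N" for k using C0[OF that] geo_full[OF K_pos] by simp
    then have "aperiodic_AF (s i) (s j) (N * K) (int 0) v = 0" using AF_pos[of 0 i j v] N_pos by simp
    then show ?thesis using p1 by simp
  next
    case True
    then have ij: "i \<noteq> j" using assms(4) by blast
    have "C i j 0 v k = of_nat K * (h i k * cnj (h j k))" if "k < N" for k using C0[OF that] True by simp
    then have "aperiodic_AF (s i) (s j) (N * K) (int 0) v = of_nat K * (\<Sum>k<N. h i k * cnj (h j k))"
      using AF_pos[of 0 i j v] N_pos by (simp add: sum_distrib_left)
    then have "cmod (aperiodic_AF (s i) (s j) (N * K) (int 0) v) = real K * cmod (\<Sum>k<N. h i k * cnj (h j k))"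
      by (simp add: norm_mult)
    also have "\<dots> \<le> real K * 1" using h_corr assms(2,3) ij by (intro mult_left_mono) auto
    finally show ?thesis using p1 by simp
  qed
qed

end

context lz begin

lemma main_all: assumes "i < N" "j < N" "\<bar>\<tau>\<bar> < int p" "vcond v" "i = j \<longrightarrow> (\<tau>, v) \<noteq> (0, 0)"
    and h_corr: "\<forall>i<N. \<forall>j<N. i \<noteq> j \<longrightarrow> cmod (\<Sum>n<N. h i n * cnj (h j n)) \<le> 1"
  shows "cmod (aperiodic_AF (s i) (s j) (N * K) \<tau> v) \<le> real K + real p - 1"
proof -
  consider "\<tau> > 0" | "\<tau> = 0" | "\<tau> < 0" by linarith
  then show ?thesis
  proof cases
    case 1
    then obtain n where n: "\<tau> = int n" "0 < n" by (metis pos_int_cases)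
    have np: "n < p" using n assms(3) by simp
    show ?thesis unfolding n(1) by (rule main_pos[OF n(2) np assms(4,1,2)])
  next
    case 2
    have "i = j \<longrightarrow> v \<noteq> 0" using assms(5) 2 by simp
    from main_zero[OF assms(4,1,2) this h_corr] show ?thesis using 2 by simp
  next
    case 3
    then obtain n where n: "\<tau> = - int n" "0 < n" by (metis neg_int_cases)
    have np: "n < p" using n assms(3) by simp
    have "N \<le> N * K" using K_pos by simp
    then have nNK: "n < N * K" using np p_le_N by linarith
    have "cmod (aperiodic_AF (s i) (s j) (N * K) \<tau> v) = cmod (aperiodic_AF (s j) (s i) (N * K) (int n) (- v))"
      unfolding n(1) AF_neg[OF n(2) nNK] by (simp add: norm_mult)
    also have "\<dots> \<le> real K + real p - 1"
      using main_pos[OF n(2) np vcond_neg[OF assms(4)] assms(2,1)] .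
    finally show ?thesis .
  qed
qed

end

theorem corollary2:
  fixes N K p :: nat and a2 a1 :: int
    and h :: "nat \<Rightarrow> nat \<Rightarrow> complex" and s :: "nat \<Rightarrow> nat \<Rightarrow> complex"
    and f :: "nat \<Rightarrow> int"
  assumes N_odd: "odd N" and N_gt: "N > 2"
    and p_prime: "prime p" and p_dvd: "p dvd N"
    and p_min: "\<forall>q. prime q \<and> q dvd N \<longrightarrow> p \<le> q"
    and K_ge: "K \<ge> N"
    and a2_cop: "coprime a2 (int N)"
    and f_def: "\<forall>x. f x = ((a2 * (int x)^2 + a1 * int x) mod int N) mod int K"
    and h_unimod: "\<forall>i<N. \<forall>n<N. cmod (h i n) = 1"
    and h_corr: "\<forall>i<N. \<forall>j<N. i \<noteq> j \<longrightarrow>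
                   cmod (\<Sum>n<N. h i n * cnj (h j n)) \<le> 1"
    and h_amb: "\<forall>i<N. \<forall>j<N. i \<noteq> j \<longrightarrow> (\<forall>v<N.
                   cmod (\<Sum>n<N. h i n * cnj (h j n) * omega_pow N (int n * int v)) < real N)"
    and s_def: "\<forall>i<N. \<forall>t<K. \<forall>k<N.
                   s i (t * N + k) = h i k * omega_pow K (int t * f k)"
  shows "is_LAZ_aperiodic N (N * K)
           (if K = N then {- int p <..< int p} \<times> {- int N <..< int N}
            else if K < 2 * N - 1 then {- int p <..< int p} \<times> {- int K + int N - 1 <..< int K - int N + 1}
            else {- int p <..< int p} \<times> {- int K <..< int K})
           (real K + real p - 1) s"
proof -
  interpret lz N K p a2 a1 h s f
    by (rule lz.intro[OF N_odd N_gt p_prime p_dvd p_min K_ge a2_cop f_def h_unimod s_def])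
  define Pi where "Pi = (if K = N then {- int p <..< int p} \<times> {- int N <..< int N}
            else if K < 2 * N - 1 then {- int p <..< int p} \<times> {- int K + int N - 1 <..< int K - int N + 1}
            else {- int p <..< int p} \<times> {- int K <..< int K})"
  have mem: "\<bar>\<tau>\<bar> < int p \<and> vcond v" if "(\<tau>, v) \<in> Pi" for \<tau> v
  proof -
    have t: "\<bar>\<tau>\<bar> < int p" using that unfolding Pi_def by (auto split: if_splits)
    have "vcond v"
    proof (cases "K = N")
      case True then show ?thesis using that unfolding Pi_def vcond_def by auto
    next
      case KN: False
      show ?thesis
      proof (cases "K < 2 * N - 1")
        case True
        then have "v \<in> {- int K + int N - 1 <..< int K - int N + 1}" using that KN unfolding Pi_def by auto
        then show ?thesis using True KN K_ge unfolding vcond_def by auto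
      next
        case False
        then have "v \<in> {- int K <..< int K}" using that KN unfolding Pi_def by auto
        then show ?thesis using False unfolding vcond_def by auto
      qed
    qed
    then show ?thesis using t by simp
  qed
  show ?thesis
    unfolding is_LAZ_aperiodic_def Pi_def[symmetric]
  proof (intro conjI allI impI)
    fix i \<tau> v assume a: "i < N" "(\<tau>, v) \<in> Pi \<and> (\<tau>, v) \<noteq> (0, 0)"
    show "cmod (aperiodic_AF (s i) (s i) (N * K) \<tau> v) \<le> real K + real p - 1"
      using main_all[OF a(1) a(1) _ _ _ h_corr] mem a(2) by blast
  next
    fix i j \<tau> v assume a: "i < N" "j < N" "i \<noteq> j" "(\<tau>, v) \<in> Pi"
    show "cmod (aperiodic_AF (s i) (s j) (N * K) \<tau> v) \<le> real K + real p - 1"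
      using main_all[OF a(1) a(2) _ _ _ h_corr] mem a(3,4) by blast
  qed
qed

end
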